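(* Let $\underline{X}=(X_n,p_n)$ be an inverse sequence of sets and $(T_{\underline{X}},v)$ its tree. If $\underline{X}$ is Mittag-Leffler, then for each $n_0$ there is $n_1>n_0$ such that for every $\alpha\in X_{n_0}$ extendable to $n_1$, the arc in $T_{\underline{X}}$ from the root $v$ to the vertex $\alpha$ is geodesically complete, i.e. it is contained in the image of an isometric embedding $F:[0,\infty)\to T_{\underline{X}}$ with $F(0)=v$.
   Context: An inverse sequence of sets $(X_n,p_n)_{n\ge1}$ has maps $p_n:X_{n+1}\to X_n$; $p_{nm}=p_n\circ\cdots\circ p_{m-1}:X_m\to X_n$. Its tree $T_{\underline{X}}$ is the geometric realization of the graph with vertices $\{v\}\sqcup\bigsqcup_nX_n$ and edges $\{x,p_n(x)\}$ ($x\in X_{n+1}$) and $\{x,v\}$ ($x\in X_1$), edges of length 1, path metric, rooted at $v$. $\underline{X}$ is Mittag-Leffler (ML) if for every $n_0$ there is $n_1>n_0$ such that for all $n>n_1$, $p_{n_0n}(X_n)=p_{n_0n_1}(X_{n_1})$. An element $\alpha\in X_{n_0}$ is extendable to $n_1$ if there is $\beta\in X_{n_1}$ with $p_{n_0n_1}(\beta)=\alpha$. *)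

theory Defs
  imports Complex_Main
begin

definition inv_seq :: "(nat \<Rightarrow> 'a set) \<Rightarrow> (nat \<Rightarrow> 'a \<Rightarrow> 'a) \<Rightarrow> bool" where
  "inv_seq X p \<longleftrightarrow> (\<forall>n\<ge>1. \<forall>x\<in>X (Suc n). p n x \<in> X n)"

text \<open>pk p n k = p_{n,n+k} = p_n \<circ> ... \<circ> p_{n+k-1}\<close>
primrec pk :: "(nat \<Rightarrow> 'a \<Rightarrow> 'a) \<Rightarrow> nat \<Rightarrow> nat \<Rightarrow> 'a \<Rightarrow> 'a" where
  "pk p n 0 x = x"
| "pk p n (Suc k) x = pk p n k (p (n + k) x)"

definition pnm :: "(nat \<Rightarrow> 'a \<Rightarrow> 'a) \<Rightarrow> nat \<Rightarrow> nat \<Rightarrow> 'a \<Rightarrow> 'a" where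
  "pnm p n m = pk p n (m - n)"

definition mittag_leffler :: "(nat \<Rightarrow> 'a set) \<Rightarrow> (nat \<Rightarrow> 'a \<Rightarrow> 'a) \<Rightarrow> bool" where
  "mittag_leffler X p \<longleftrightarrow>
     (\<forall>n0\<ge>1. \<exists>n1>n0. \<forall>n>n1. pnm p n0 n ` X n = pnm p n0 n1 ` X n1)"

definition extendable :: "(nat \<Rightarrow> 'a set) \<Rightarrow> (nat \<Rightarrow> 'a \<Rightarrow> 'a) \<Rightarrow> nat \<Rightarrow> 'a \<Rightarrow> nat \<Rightarrow> bool" where
  "extendable X p n0 \<alpha> n1 \<longleftrightarrow> (\<exists>\<beta>\<in>X n1. pnm p n0 n1 \<beta> = \<alpha>)"

text \<open>Points of the geometric realisation T_X of the tree.
  None is the root v.  Some (n, x, t) with n \<ge> 1, x \<in> X n, 0 < t \<le> 1 is the point on the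
  edge joining x to its parent (p_{n-1}(x), resp. v if n = 1) at distance t from the parent;
  t = 1 gives the vertex x itself.  Every point of T_X has exactly one such representation.\<close>
type_synonym 'a tpt = "(nat \<times> 'a \<times> real) option"

definition tree_pts :: "(nat \<Rightarrow> 'a set) \<Rightarrow> 'a tpt set" where
  "tree_pts X = {None} \<union> {Some (n, x, t) | n x t. 1 \<le> n \<and> x \<in> X n \<and> 0 < t \<and> t \<le> 1}"

fun theight :: "'a tpt \<Rightarrow> real" where
  "theight None = 0"
| "theight (Some (n, x, t)) = real n - 1 + t"

text \<open>Height of the meet (last common point of the root-arcs) of two points.\<close>
fun tmeet :: "(nat \<Rightarrow> 'a \<Rightarrow> 'a) \<Rightarrow> 'a tpt \<Rightarrow> 'a tpt \<Rightarrow> real" where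
  "tmeet p None Q = 0"
| "tmeet p P None = 0"
| "tmeet p (Some (n, x, t)) (Some (m, y, s)) =
     (let C = {k. 1 \<le> k \<and> k \<le> min n m \<and> pnm p k n x = pnm p k m y} in
      if C = {} then 0
      else let K = Max C in
        if K < n \<and> K < m then real K
        else if n = m then real n - 1 + min t s
        else if K = n then real n - 1 + t
        else real m - 1 + s)"

definition tdist :: "(nat \<Rightarrow> 'a \<Rightarrow> 'a) \<Rightarrow> 'a tpt \<Rightarrow> 'a tpt \<Rightarrow> real" where
  "tdist p P Q = theight P + theight Q - 2 * tmeet p P Q"

definition root_arc :: "(nat \<Rightarrow> 'a \<Rightarrow> 'a) \<Rightarrow> nat \<Rightarrow> 'a \<Rightarrow> 'a tpt set" where
  "root_arc p n0 \<alpha> = {None} \<union>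
     {Some (m, pnm p m n0 \<alpha>, s) | m s. 1 \<le> m \<and> m \<le> n0 \<and> 0 < s \<and> s \<le> 1}"

definition isometric_ray :: "(nat \<Rightarrow> 'a set) \<Rightarrow> (nat \<Rightarrow> 'a \<Rightarrow> 'a) \<Rightarrow> (real \<Rightarrow> 'a tpt) \<Rightarrow> bool" where
  "isometric_ray X p F \<longleftrightarrow>
     (\<forall>s\<ge>0. F s \<in> tree_pts X) \<and>
     (\<forall>s\<ge>0. \<forall>r\<ge>0. tdist p (F s) (F r) = \<bar>s - r\<bar>)"

end

theory Submission
  imports Defs
begin

lemma pk_Suc_left: "pk p n (Suc k) x = p n (pk p (Suc n) k x)"
proof (induction k arbitrary: x)
  case 0 then show ?case by simp
next
  case (Suc k)
  have "pk p n (Suc (Suc k)) x = pk p n (Suc k) (p (n + Suc k) x)" by simp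
  also have "\<dots> = p n (pk p (Suc n) k (p (n + Suc k) x))" by (rule Suc.IH)
  also have "\<dots> = p n (pk p (Suc n) (Suc k) x)" by simp
  finally show ?case .
qed

lemma pk_in: assumes "inv_seq X p" "1 \<le> n" shows "x \<in> X (n + k) \<Longrightarrow> pk p n k x \<in> X n"
  using assms(2)
proof (induction k arbitrary: n)
  case 0 then show ?case by simp
next
  case (Suc k)
  have "pk p (Suc n) k x \<in> X (Suc n)" using Suc by simp
  then have "p n (pk p (Suc n) k x) \<in> X n" using assms(1) Suc.prems(2) unfolding inv_seq_def by auto
  then show ?case by (simp only: pk_Suc_left)
qed

lemma pnm_in: "inv_seq X p \<Longrightarrow> 1 \<le> n \<Longrightarrow> n \<le> m \<Longrightarrow> x \<in> X m \<Longrightarrow> pnm p n m x \<in> X n"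
  unfolding pnm_def using pk_in[of X p n x "m - n"] by simp

lemma pnm_step: "n < m \<Longrightarrow> pnm p n m w = p n (pnm p (Suc n) m w)"
  unfolding pnm_def using pk_Suc_left[of p n "m - Suc n" w]
  by (metis Suc_diff_Suc)

lemma thread_pk:
  assumes "\<forall>n\<ge>1. p n (x (Suc n)) = x n" "1 \<le> k"
  shows "pk p k d (x (k + d)) = x k"
proof (induction d)
  case 0 then show ?case by simp
next
  case (Suc d)
  have "pk p k (Suc d) (x (k + Suc d)) = pk p k d (p (k + d) (x (Suc (k + d))))" by simp
  also have "p (k + d) (x (Suc (k + d))) = x (k + d)" using assms by simp
  finally show ?case using Suc.IH by simp
qed

lemma thread_pnm:
  assumes "\<forall>n\<ge>1. p n (x (Suc n)) = x n" "1 \<le> k" "k \<le> n"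
  shows "pnm p k n (x n) = x k"
  using thread_pk[of p x k "n - k", OF assms(1,2)] assms(3) unfolding pnm_def by simp

lemma tmeet_thread:
  assumes "\<forall>n\<ge>1. p n (x (Suc n)) = x n" "1 \<le> n" "1 \<le> m"
  shows "tmeet p (Some (n, x n, t)) (Some (m, x m, u)) =
    (if n < m then real n - 1 + t else if n = m then real n - 1 + min t u else real m - 1 + u)"
proof -
  have C: "{k. 1 \<le> k \<and> k \<le> min n m \<and> pnm p k n (x n) = pnm p k m (x m)} = {1..min n m}"
    using thread_pnm[of p x, OF assms(1)] by auto
  have ne: "{1..min n m} \<noteq> {}" using assms by auto
  have mx: "Max {1..min n m} = min n m" using assms by (simp add: Max_eq_iff)
  show ?thesis
    by (simp only: tmeet.simps Let_def C ne mx if_False) (auto simp: min_def)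
qed

definition rayF :: "(nat \<Rightarrow> 'a) \<Rightarrow> real \<Rightarrow> 'a tpt" where
  "rayF x s = (if s \<le> 0 then None else
      Some (nat \<lceil>s\<rceil>, x (nat \<lceil>s\<rceil>), s - real (nat \<lceil>s\<rceil>) + 1))"

lemma ceil_facts:
  assumes "(s::real) > 0"
  shows "1 \<le> nat \<lceil>s\<rceil>" "real (nat \<lceil>s\<rceil>) - 1 < s" "s \<le> real (nat \<lceil>s\<rceil>)"
proof -
  have "0 < \<lceil>s\<rceil>" using assms by simp
  then have "\<lceil>s\<rceil> \<ge> 1" by simp
  then show "1 \<le> nat \<lceil>s\<rceil>" using nat_mono[of 1 "\<lceil>s\<rceil>"] by simp
  have e: "real (nat \<lceil>s\<rceil>) = of_int \<lceil>s\<rceil>" using \<open>\<lceil>s\<rceil> \<ge> 1\<close> by simp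
  show "real (nat \<lceil>s\<rceil>) - 1 < s" unfolding e by linarith
  show "s \<le> real (nat \<lceil>s\<rceil>)" unfolding e by linarith
qed

lemma theight_rayF: "s \<ge> 0 \<Longrightarrow> theight (rayF x s) = s"
  unfolding rayF_def by auto

lemma rayF_ray:
  assumes thr: "\<forall>n\<ge>1. p n (x (Suc n)) = x n" and xin: "\<forall>n\<ge>1. x n \<in> X n"
  shows "isometric_ray X p (rayF x)"
  unfolding isometric_ray_def
proof (intro conjI allI impI)
  fix s :: real assume "s \<ge> 0"
  show "rayF x s \<in> tree_pts X"
  proof (cases "s \<le> 0")
    case True then show ?thesis by (simp add: rayF_def tree_pts_def)
  next
    case False
    then have "s > 0" by simp
    note c = ceil_facts[OF this]
    show ?thesis using False c xin unfolding rayF_def tree_pts_def by auto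
  qed
next
  fix s r :: real assume s0: "s \<ge> 0" and r0: "r \<ge> 0"
  show "tdist p (rayF x s) (rayF x r) = \<bar>s - r\<bar>"
  proof (cases "s \<le> 0 \<or> r \<le> 0")
    case True
    then show ?thesis
    proof
      assume "s \<le> 0"
      then have "rayF x s = None" by (simp add: rayF_def)
      then show ?thesis using s0 r0 \<open>s \<le> 0\<close> theight_rayF[OF r0] by (simp add: tdist_def)
    next
      assume "r \<le> 0"
      then have "rayF x r = None" by (simp add: rayF_def)
      moreover have "tmeet p (rayF x s) None = 0" by (cases "rayF x s") auto
      ultimately show ?thesis using s0 r0 \<open>r \<le> 0\<close> theight_rayF[OF s0] by (simp add: tdist_def)
    qed
  next
    case False
    then have sp: "s > 0" and rp: "r > 0" by auto
    define n where "n = nat \<lceil>s\<rceil>"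
    define m where "m = nat \<lceil>r\<rceil>"
    note cs = ceil_facts[OF sp, folded n_def] and cr = ceil_facts[OF rp, folded m_def]
    have Fs: "rayF x s = Some (n, x n, s - real n + 1)" using sp by (simp add: rayF_def n_def)
    have Fr: "rayF x r = Some (m, x m, r - real m + 1)" using rp by (simp add: rayF_def m_def)
    have tm: "tmeet p (rayF x s) (rayF x r) =
      (if n < m then real n - 1 + (s - real n + 1) else if n = m then real n - 1 + min (s - real n + 1) (r - real m + 1)
       else real m - 1 + (r - real m + 1))"
      unfolding Fs Fr by (rule tmeet_thread[of p x, OF thr cs(1) cr(1)])
    have h: "theight (rayF x s) = s" "theight (rayF x r) = r" using s0 r0 theight_rayF by auto
    show ?thesis
    proof (cases "n < m")
      case True
      then have "real n + 1 \<le> real m" by simp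
      then show ?thesis using tm h True cs cr by (simp add: tdist_def)
    next
      case False
      show ?thesis
      proof (cases "n = m")
        case True then show ?thesis using tm h cs cr by (simp add: tdist_def min_def abs_if)
      next
        case F2: False
        then have "real m + 1 \<le> real n" using False by simp
        then show ?thesis using tm h False F2 cs cr by (simp add: tdist_def)
      qed
    qed
  qed
qed

lemma rayF_hits:
  assumes "1 \<le> m" "0 < s" "s \<le> (1::real)"
  shows "Some (m, x m, s) = rayF x (real m - 1 + s)"
proof -
  have "\<lceil>real m - 1 + s\<rceil> = int m"
    by (rule ceiling_unique) (use assms in auto)
  then show ?thesis using assms unfolding rayF_def by auto
qed

theorem proposition7p7:
  fixes X :: "nat \<Rightarrow> 'a set" and p :: "nat \<Rightarrow> 'a \<Rightarrow> 'a"
  assumes "inv_seq X p"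
    and "mittag_leffler X p"
  shows "\<forall>n0\<ge>1. \<exists>n1>n0. \<forall>\<alpha>\<in>X n0. extendable X p n0 \<alpha> n1 \<longrightarrow>
           (\<exists>F. isometric_ray X p F \<and> F 0 = None \<and> root_arc p n0 \<alpha> \<subseteq> F ` {0..})"
proof (intro allI impI)
  fix n0 :: nat assume n01: "1 \<le> n0"
  define N where "N n = (SOME n1. n1 > n \<and> (\<forall>m>n1. pnm p n m ` X m = pnm p n n1 ` X n1))" for n
  have Nprop: "N n > n \<and> (\<forall>m>N n. pnm p n m ` X m = pnm p n (N n) ` X (N n))" if "1 \<le> n" for n
    unfolding N_def by (rule someI_ex) (use assms(2) that in \<open>auto simp: mittag_leffler_def\<close>)
  define Y where "Y n = pnm p n (N n) ` X (N n)" for n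
  have Yeq: "pnm p n m ` X m = Y n" if "1 \<le> n" "N n \<le> m" for n m
    using Nprop[OF that(1)] that(2) unfolding Y_def by (cases "m = N n") auto
  have YX: "Y n \<subseteq> X n" if "1 \<le> n" for n
    using Nprop[OF that] pnm_in[OF assms(1) that] unfolding Y_def by auto
  have lift: "\<exists>z. z \<in> Y (Suc n) \<and> p n z = y" if "1 \<le> n" "y \<in> Y n" for n y
  proof -
    define m where "m = max (N n) (N (Suc n))"
    have "y \<in> pnm p n m ` X m" using Yeq[OF that(1), of m] that(2) by (simp add: m_def)
    then obtain w where w: "w \<in> X m" "y = pnm p n m w" by auto
    have "n < m" using Nprop[OF that(1)] by (auto simp: m_def less_max_iff_disj)
    have "pnm p (Suc n) m w \<in> Y (Suc n)"
      using Yeq[of "Suc n" m] w(1) that(1) by (auto simp: m_def)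
    moreover have "p n (pnm p (Suc n) m w) = y" using pnm_step[OF \<open>n < m\<close>, of p w] w(2) by argo
    ultimately show ?thesis by blast
  qed
  show "\<exists>n1>n0. \<forall>\<alpha>\<in>X n0. extendable X p n0 \<alpha> n1 \<longrightarrow>
           (\<exists>F. isometric_ray X p F \<and> F 0 = None \<and> root_arc p n0 \<alpha> \<subseteq> F ` {0..})"
  proof (intro exI[of _ "N n0"] conjI ballI impI)
    show "n0 < N n0" using Nprop[OF n01] by simp
    fix \<alpha> assume "\<alpha> \<in> X n0" "extendable X p n0 \<alpha> (N n0)"
    then have aY: "\<alpha> \<in> Y n0" unfolding extendable_def Y_def by auto
    define g where "g = rec_nat \<alpha> (\<lambda>k gk. SOME z. z \<in> Y (Suc (n0 + k)) \<and> p (n0 + k) z = gk)"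
    have g0: "g 0 = \<alpha>" by (simp add: g_def)
    have gS: "g (Suc k) = (SOME z. z \<in> Y (Suc (n0 + k)) \<and> p (n0 + k) z = g k)" for k
      by (simp add: g_def)
    have gSprop: "g (Suc k) \<in> Y (Suc (n0 + k)) \<and> p (n0 + k) (g (Suc k)) = g k"
      if "g k \<in> Y (n0 + k)" for k
    proof -
      have "\<exists>z. z \<in> Y (Suc (n0 + k)) \<and> p (n0 + k) z = g k"
        using lift[of "n0 + k" "g k"] n01 that by simp
      then show ?thesis unfolding gS by (rule someI_ex)
    qed
    have gYin: "g k \<in> Y (n0 + k)" for k
    proof (induction k)
      case 0 then show ?case using aY g0 by simp
    next
      case (Suc k) then show ?case using gSprop[of k] by simp
    qed
    have gY: "g k \<in> Y (n0 + k) \<and> p (n0 + k) (g (Suc k)) = g k" for k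
      using gYin[of k] gSprop[of k] by simp
    define x where "x n = (if n0 \<le> n then g (n - n0) else pnm p n n0 \<alpha>)" for n
    have xlow: "x n = pnm p n n0 \<alpha>" if "n \<le> n0" for n
      using that g0 by (cases "n = n0") (auto simp: x_def pnm_def)
    have thr: "\<forall>n\<ge>1. p n (x (Suc n)) = x n"
    proof (intro allI impI)
      fix n :: nat assume "1 \<le> n"
      show "p n (x (Suc n)) = x n"
      proof (cases "n0 \<le> n")
        case True
        then have "x (Suc n) = g (Suc (n - n0))" "x n = g (n - n0)" by (auto simp: x_def Suc_diff_le)
        then show ?thesis using gY[of "n - n0"] True by simp
      next
        case False
        then show ?thesis using xlow[of n] xlow[of "Suc n"] pnm_step[of n n0 p \<alpha>] by simp
      qed
    qed
    have xin: "\<forall>n\<ge>1. x n \<in> X n"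
    proof (intro allI impI)
      fix n :: nat assume n1: "1 \<le> n"
      show "x n \<in> X n"
      proof (cases "n0 \<le> n")
        case True
        then show ?thesis using gY[of "n - n0"] YX[OF n1] by (auto simp: x_def)
      next
        case False
        then show ?thesis using xlow[of n] pnm_in[OF assms(1) n1, of n0 \<alpha>] \<open>\<alpha> \<in> X n0\<close> by simp
      qed
    qed
    show "\<exists>F. isometric_ray X p F \<and> F 0 = None \<and> root_arc p n0 \<alpha> \<subseteq> F ` {0..}"
    proof (intro exI[of _ "rayF x"] conjI)
      show "isometric_ray X p (rayF x)" by (rule rayF_ray[of p x X, OF thr xin])
      show "rayF x 0 = None" by (simp add: rayF_def)
      show "root_arc p n0 \<alpha> \<subseteq> rayF x ` {0..}"
      proof
        fix P assume "P \<in> root_arc p n0 \<alpha>"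
        then consider "P = None" | m s where "P = Some (m, pnm p m n0 \<alpha>, s)" "1 \<le> m" "m \<le> n0" "0 < s" "s \<le> 1"
          unfolding root_arc_def by auto
        then show "P \<in> rayF x ` {0..}"
        proof cases
          case 1 then show ?thesis by (auto simp: rayF_def image_iff intro!: bexI[of _ 0])
        next
          case 2
          then have "P = rayF x (real m - 1 + s)" using rayF_hits[of m s x] xlow[of m] by simp
          moreover have "real m - 1 + s \<in> {0..}" using 2 by simp
          ultimately show ?thesis by blast
        qed
      qed
    qed
  qed
qed

end
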